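(* Let $C$ be an Additive-CSP($\psi$) constraint on variables $x_1,\dots,x_k$, let $G$ be its label-extended graph and $G^0$ the label-extended graph of the homogeneous constraint $C^0$. Then: (Completeness) for each assignment $\alpha:\{x_1,\dots,x_k\}\to H$ satisfying $C$ there is an $\alpha$-permutation $f$ which is a homomorphism from $G$ to $G^0$; (Soundness) if $f$ is an $\alpha$-permutation which is a homomorphism from $G$ to $G^0$, then $\alpha$ satisfies $C$.
   Context: $H$ is a finite abelian group, $k\ge3$, and $\psi\subseteq H^k$ is a balanced pairwise independent subgroup: a proper subgroup of $H^k$ such that for $a$ uniform in $\psi$ each coordinate is uniform on $H$ and any two coordinates are independent. An Additive-CSP($\psi$) constraint $C$ on distinct variables $x_1,\dots,x_k$ (taking values in $H$) has the form $\psi(x_1+a_1,\dots,x_k+a_k)=1$ with $a_i\in H$; its homogeneous version $C^0$ is $\psi(x_1,\dots,x_k)=1$. The label-extended graph of $C$ has variable vertices $x_i\mapsto b$ for $i\in[k]$, $b\in H$, and one constraint vertex for each assignment $\beta:\{x_1,\dots,x_k\}\to H$ satisfying $C$; its only edges join each constraint vertex $\beta$ to the $k$ variable vertices $x_i\mapsto\beta(x_i)$. The label-extended graphs of $C$ and $C^0$ share the names of variable vertices. For an assignment $\alpha$, a bijection $f$ from the vertices of $G$ to the vertices of $G^0$ is an $\alpha$-permutation if $f(x_i\mapsto b)=x_i\mapsto(b-\alpha(x_i))$ for every $i\in[k]$ and $b\in H$. $f$ is a homomorphism from $G$ to $G^0$ if it maps every edge of $G$ to an edge of $G^0$. *)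

theory Defs
  imports Main
begin

text \<open>H is a finite abelian group ('h), the k coordinates / variables are indexed
 by a finite type 'k (so k = CARD('k)); an element of H^k is a function 'k \<Rightarrow> 'h.\<close>

definition balanced_pairwise_independent :: "('k::finite \<Rightarrow> 'h::{finite,ab_group_add}) set \<Rightarrow> bool" where
  "balanced_pairwise_independent \<psi> \<longleftrightarrow>
     (\<lambda>_. 0) \<in> \<psi> \<and> (\<forall>a\<in>\<psi>. \<forall>b\<in>\<psi>. (\<lambda>i. a i + b i) \<in> \<psi>) \<and> (\<forall>a\<in>\<psi>. (\<lambda>i. - a i) \<in> \<psi>) \<and> \<psi> \<noteq> UNIV \<and>
     (\<forall>i b. card {a\<in>\<psi>. a i = b} * card (UNIV :: 'h set) = card \<psi>) \<and>
     (\<forall>i j. i \<noteq> j \<longrightarrow> (\<forall>b c. card {a\<in>\<psi>. a i = b \<and> a j = c} * card (UNIV :: 'h set)^2 = card \<psi>))"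

text \<open>The constraint C is psi(x_1 + a_1, ..., x_k + a_k) = 1, given by the shift vector a.
 An assignment beta satisfies C iff (beta_i + a_i)_i \<in> psi. The homogeneous version C^0 has a = 0.\<close>
definition csp_sat :: "('k \<Rightarrow> 'h::ab_group_add) set \<Rightarrow> ('k \<Rightarrow> 'h) \<Rightarrow> ('k \<Rightarrow> 'h) \<Rightarrow> bool" where
  "csp_sat \<psi> a \<beta> \<longleftrightarrow> (\<lambda>i. \<beta> i + a i) \<in> \<psi>"

datatype ('k, 'h) lvert = VarV 'k 'h | ConV "'k \<Rightarrow> 'h"

definition lverts :: "('k \<Rightarrow> 'h::ab_group_add) set \<Rightarrow> ('k \<Rightarrow> 'h) \<Rightarrow> ('k, 'h) lvert set" where
  "lverts \<psi> a = {VarV i b | i b. True} \<union> ConV ` {\<beta>. csp_sat \<psi> a \<beta>}"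

definition ledges :: "('k \<Rightarrow> 'h::ab_group_add) set \<Rightarrow> ('k \<Rightarrow> 'h) \<Rightarrow> ('k, 'h) lvert set set" where
  "ledges \<psi> a = {{ConV \<beta>, VarV i (\<beta> i)} | \<beta> i. csp_sat \<psi> a \<beta>}"

definition alpha_perm ::
  "('k \<Rightarrow> 'h::ab_group_add) set \<Rightarrow> ('k \<Rightarrow> 'h) \<Rightarrow> ('k \<Rightarrow> 'h) \<Rightarrow> (('k,'h) lvert \<Rightarrow> ('k,'h) lvert) \<Rightarrow> bool" where
  "alpha_perm \<psi> a \<alpha> f \<longleftrightarrow> bij_betw f (lverts \<psi> a) (lverts \<psi> (\<lambda>_. 0)) \<and>
     (\<forall>i b. f (VarV i b) = VarV i (b - \<alpha> i))"

definition is_graph_hom :: "'v set set \<Rightarrow> 'w set set \<Rightarrow> ('v \<Rightarrow> 'w) \<Rightarrow> bool" where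
  "is_graph_hom E E0 f \<longleftrightarrow> (\<forall>e\<in>E. f ` e \<in> E0)"

end

theory Submission
  imports Defs
begin

lemma bp_neg: "balanced_pairwise_independent \<psi> \<Longrightarrow> x \<in> \<psi> \<Longrightarrow> (\<lambda>i. - x i) \<in> \<psi>"
  unfolding balanced_pairwise_independent_def by (elim conjE) blast
lemma bp_add: "balanced_pairwise_independent \<psi> \<Longrightarrow> x \<in> \<psi> \<Longrightarrow> y \<in> \<psi> \<Longrightarrow> (\<lambda>i. x i + y i) \<in> \<psi>"
  unfolding balanced_pairwise_independent_def by (elim conjE) blast
lemma bp_zero: "balanced_pairwise_independent \<psi> \<Longrightarrow> (\<lambda>_. 0) \<in> \<psi>"
  unfolding balanced_pairwise_independent_def by (elim conjE) assumption

lemma sub_mem: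
  assumes bp: "balanced_pairwise_independent \<psi>" and x: "x \<in> \<psi>" and y: "y \<in> \<psi>"
  shows "(\<lambda>i. x i - y i) \<in> \<psi>"
proof -
  have "(\<lambda>i. - y i) \<in> \<psi>" using bp y by (rule bp_neg)
  hence "(\<lambda>i. x i + (\<lambda>i. - y i) i) \<in> \<psi>" using x bp_add[OF bp] by blast
  thus ?thesis by simp
qed

theorem lemma7p2:
  fixes \<psi> :: "('k::finite \<Rightarrow> 'h::{finite,ab_group_add}) set" and a :: "'k \<Rightarrow> 'h"
  assumes "card (UNIV :: 'k set) \<ge> 3" and "balanced_pairwise_independent \<psi>"
  shows "(\<forall>\<alpha>. csp_sat \<psi> a \<alpha> \<longrightarrow>
            (\<exists>f. alpha_perm \<psi> a \<alpha> f \<and> is_graph_hom (ledges \<psi> a) (ledges \<psi> (\<lambda>_. 0)) f))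
       \<and> (\<forall>\<alpha> f. alpha_perm \<psi> a \<alpha> f \<and> is_graph_hom (ledges \<psi> a) (ledges \<psi> (\<lambda>_. 0)) f
            \<longrightarrow> csp_sat \<psi> a \<alpha>)"
proof (intro conjI allI impI)
  note bp = assms(2)
  fix \<alpha> assume sat: "csp_sat \<psi> a \<alpha>"
  define f where "f = (\<lambda>v. case v of VarV i b \<Rightarrow> VarV i (b - \<alpha> i) | ConV \<beta> \<Rightarrow> ConV (\<lambda>i. \<beta> i - \<alpha> i))"
  define g where "g = (\<lambda>v. case v of VarV i b \<Rightarrow> VarV i (b + \<alpha> i) | ConV \<beta> \<Rightarrow> ConV (\<lambda>i. \<beta> i + \<alpha> i))"
  have s1: "csp_sat \<psi> (\<lambda>_. 0) (\<lambda>i. \<beta> i - \<alpha> i)" if "csp_sat \<psi> a \<beta>" for \<beta>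
  proof -
    have "(\<lambda>i. (\<beta> i + a i) - (\<alpha> i + a i)) \<in> \<psi>"
      using sub_mem[OF bp, of "\<lambda>i. \<beta> i + a i" "\<lambda>i. \<alpha> i + a i"] that sat
      unfolding csp_sat_def by simp
    thus ?thesis unfolding csp_sat_def by (simp add: algebra_simps)
  qed
  have s2: "csp_sat \<psi> a (\<lambda>i. \<gamma> i + \<alpha> i)" if "csp_sat \<psi> (\<lambda>_. 0) \<gamma>" for \<gamma>
  proof -
    have "(\<lambda>i. (\<alpha> i + a i) - (- \<gamma> i)) \<in> \<psi>"
    proof (rule sub_mem[OF bp])
      show "(\<lambda>i. \<alpha> i + a i) \<in> \<psi>" using sat unfolding csp_sat_def .
      have "\<gamma> \<in> \<psi>" using that unfolding csp_sat_def by simp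
      hence "(\<lambda>i. - \<gamma> i) \<in> \<psi>" using bp by (simp add: bp_neg)
      thus "(\<lambda>i. - \<gamma> i) \<in> \<psi>" .
    qed
    thus ?thesis unfolding csp_sat_def by (simp add: algebra_simps)
  qed
  have bij: "bij_betw f (lverts \<psi> a) (lverts \<psi> (\<lambda>_. 0))"
  proof (rule bij_betw_byWitness[where f'=g])
    show "f ` lverts \<psi> a \<subseteq> lverts \<psi> (\<lambda>_. 0)"
    proof
      fix y assume "y \<in> f ` lverts \<psi> a"
      then obtain x where x: "x \<in> lverts \<psi> a" "y = f x" by blast
      show "y \<in> lverts \<psi> (\<lambda>_. 0)"
      proof (cases x)
        case (VarV i b) thus ?thesis using x unfolding lverts_def f_def by simp
      next
        case (ConV \<beta>)
        hence "csp_sat \<psi> a \<beta>" using x unfolding lverts_def by auto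
        thus ?thesis using x ConV s1 unfolding lverts_def f_def by simp
      qed
    qed
    show "g ` lverts \<psi> (\<lambda>_. 0) \<subseteq> lverts \<psi> a"
    proof
      fix y assume "y \<in> g ` lverts \<psi> (\<lambda>_. 0)"
      then obtain x where x: "x \<in> lverts \<psi> (\<lambda>_. 0)" "y = g x" by blast
      show "y \<in> lverts \<psi> a"
      proof (cases x)
        case (VarV i b) thus ?thesis using x unfolding lverts_def g_def by simp
      next
        case (ConV \<beta>)
        hence "csp_sat \<psi> (\<lambda>_. 0) \<beta>" using x unfolding lverts_def by auto
        thus ?thesis using x ConV s2 unfolding lverts_def g_def by simp
      qed
    qed
    have "g (f x) = x" for x unfolding f_def g_def by (cases x) simp_all
    thus "\<forall>x\<in>lverts \<psi> a. g (f x) = x" by blast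
    have "f (g x) = x" for x unfolding f_def g_def by (cases x) simp_all
    thus "\<forall>x\<in>lverts \<psi> (\<lambda>_. 0). f (g x) = x" by blast
  qed
  have hom: "is_graph_hom (ledges \<psi> a) (ledges \<psi> (\<lambda>_. 0)) f"
    unfolding is_graph_hom_def
  proof
    fix e assume "e \<in> ledges \<psi> a"
    then obtain \<beta> i where e: "e = {ConV \<beta>, VarV i (\<beta> i)}" and b: "csp_sat \<psi> a \<beta>"
      unfolding ledges_def by blast
    have "f ` e = {ConV (\<lambda>i. \<beta> i - \<alpha> i), VarV i ((\<lambda>i. \<beta> i - \<alpha> i) i)}"
      unfolding e f_def by simp
    thus "f ` e \<in> ledges \<psi> (\<lambda>_. 0)" unfolding ledges_def using s1[OF b] by blast
  qed
  show "\<exists>f. alpha_perm \<psi> a \<alpha> f \<and> is_graph_hom (ledges \<psi> a) (ledges \<psi> (\<lambda>_. 0)) f"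
  proof -
    have "\<forall>i b. f (VarV i b) = VarV i (b - \<alpha> i)" by (simp add: f_def)
    thus ?thesis using bij hom unfolding alpha_perm_def by blast
  qed
next
  note bp = assms(2)
  fix \<alpha> f assume h: "alpha_perm \<psi> a \<alpha> f \<and> is_graph_hom (ledges \<psi> a) (ledges \<psi> (\<lambda>_. 0)) f"
  define \<beta> where "\<beta> = (\<lambda>i. - a i)"
  have b: "csp_sat \<psi> a \<beta>" using bp_zero[OF bp] unfolding csp_sat_def \<beta>_def by simp
  have fv: "\<And>i b. f (VarV i b) = VarV i (b - \<alpha> i)" using h unfolding alpha_perm_def by blast
  have key: "\<exists>\<gamma>. f (ConV \<beta>) = ConV \<gamma> \<and> \<gamma> i = \<beta> i - \<alpha> i \<and> \<gamma> \<in> \<psi>" for i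
  proof -
    have "{ConV \<beta>, VarV i (\<beta> i)} \<in> ledges \<psi> a" unfolding ledges_def using b by blast
    hence "f ` {ConV \<beta>, VarV i (\<beta> i)} \<in> ledges \<psi> (\<lambda>_. 0)" using h unfolding is_graph_hom_def by blast
    then obtain \<gamma> j where eq: "{f (ConV \<beta>), VarV i (\<beta> i - \<alpha> i)} = {ConV \<gamma>, VarV j (\<gamma> j)}"
      and g: "csp_sat \<psi> (\<lambda>_. 0) \<gamma>"
      unfolding ledges_def by (auto simp: fv)
    have "f (ConV \<beta>) = ConV \<gamma> \<and> i = j \<and> \<beta> i - \<alpha> i = \<gamma> j"
      using eq by (auto simp: doubleton_eq_iff)
    moreover have "\<gamma> \<in> \<psi>" using g unfolding csp_sat_def by simp
    ultimately show ?thesis by auto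
  qed
  obtain \<gamma> where g0: "f (ConV \<beta>) = ConV \<gamma>" "\<gamma> \<in> \<psi>"
    using key by blast
  have "\<gamma> i = \<beta> i - \<alpha> i" for i using key[of i] g0 by auto
  hence geq: "\<gamma> = (\<lambda>i. - a i - \<alpha> i)" unfolding \<beta>_def by auto
  have "(\<lambda>i. - (\<gamma> i)) \<in> \<psi>" using bp_neg[OF bp g0(2)] .
  moreover have "(\<lambda>i. - (\<gamma> i)) = (\<lambda>i. \<alpha> i + a i)" using geq by (auto simp: algebra_simps)
  ultimately show "csp_sat \<psi> a \<alpha>" unfolding csp_sat_def by simp
qed

end
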